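(* Let $\omega>0$, $\bar r>0$, $\bar v>0$ and $T>0$ be such that $e^{AT}\begin{bmatrix}-\bar r\\ \bar v\end{bmatrix}=\begin{bmatrix}\bar r\\ \bar v\end{bmatrix}$, where $A=\begin{bmatrix}0&1\\ \omega^2&0\end{bmatrix}$, and let $B=\begin{bmatrix}0\\-\omega^2\end{bmatrix}$. Consider the hybrid system with state $(x,\tau)$, $x=(x_p,x_v)\in\mathbb R^2$, input $u\in\mathbb R$: flow: $\dot x=Ax+Bu$, $\dot\tau=1$, for $(x,\tau)\in\mathcal C\times[-T,2T]$; jump: $x^+=x+\begin{bmatrix}-2\bar r\\0\end{bmatrix}$, $\tau^+=\tau-T$, for $(x,\tau)\in\mathcal D\times[-T,2T]$, where $\mathcal C=[-\bar r,\bar r]\times\mathbb R$ and $\mathcal D=\{x\in\mathcal C: x_p=\bar r\}$. Let $x_r(\tau)=e^{A\tau}\begin{bmatrix}-\bar r\\ \bar v\end{bmatrix}$ and define the tracking error $\varepsilon=(\varepsilon_p,\varepsilon_v)=x-x_r(\tau)$. Then along solutions the tracking error evolves according to the hybrid dynamics $$\dot\varepsilon=A\varepsilon+Bu \ \text{(during flows)},\qquad \varepsilon^+=\varepsilon+\bar r\begin{bmatrix}\eta(\varepsilon_p)+\frac1{\eta(\varepsilon_p)}-2\\[2pt] \omega\Big(\frac1{\eta(\varepsilon_p)}-\eta(\varepsilon_p)\Big)\end{bmatrix}\ \text{(at jumps)},$$ where $\eta(\varepsilon_p):=\dfrac{\varepsilon_p-\bar r+\sqrt{\varepsilon_p^2-2\bar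 r\varepsilon_p+(\bar v/\omega)^2}}{\bar v/\omega-\bar r}$.
   Context: Solutions of the hybrid system are understood in the standard hybrid-time-domain sense (Goebel–Sanfelice–Teel). It is known (under the stated periodicity condition) that $\bar v/\omega-\bar r>0$, so $\eta$ is well defined and positive. *)

theory Defs
  imports "HOL-Analysis.Analysis"
begin

primrec mat_pow :: "real^'n^'n \<Rightarrow> nat \<Rightarrow> real^'n^'n" where
  "mat_pow M 0 = mat 1"
| "mat_pow M (Suc k) = M ** mat_pow M k"

definition mexp :: "real^'n^'n \<Rightarrow> real^'n^'n" where
  "mexp M = (\<Sum>k. (1 / fact k) *\<^sub>R mat_pow M k)"

definition Amat :: "real \<Rightarrow> real^2^2" where
  "Amat \<omega> = vector [vector [0, 1], vector [\<omega>\<^sup>2, 0]]"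

definition Bvec :: "real \<Rightarrow> real^2" where
  "Bvec \<omega> = vector [0, - (\<omega>\<^sup>2)]"

definition flow_set :: "real \<Rightarrow> (real^2) set" where
  "flow_set rbar = {x. - rbar \<le> x$1 \<and> x$1 \<le> rbar}"

definition jump_set :: "real \<Rightarrow> (real^2) set" where
  "jump_set rbar = {x \<in> flow_set rbar. x$1 = rbar}"

definition jump_x :: "real \<Rightarrow> real^2 \<Rightarrow> real^2" where
  "jump_x rbar x = x + vector [- 2 * rbar, 0]"

definition x_ref :: "real \<Rightarrow> real \<Rightarrow> real \<Rightarrow> real \<Rightarrow> real^2" where
  "x_ref \<omega> rbar vbar \<tau> = mexp (\<tau> *\<^sub>R Amat \<omega>) *v vector [- rbar, vbar]"

definition eta :: "real \<Rightarrow> real \<Rightarrow> real \<Rightarrow> real \<Rightarrow> real" where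
  "eta \<omega> rbar vbar ep =
     (ep - rbar + sqrt (ep\<^sup>2 - 2 * rbar * ep + (vbar / \<omega>)\<^sup>2)) / (vbar / \<omega> - rbar)"

end

theory Submission imports Defs begin

lemma Amul:
  fixes \<omega> \<tau> c d :: real
  shows "(\<tau> *\<^sub>R Amat \<omega>) ** (c *\<^sub>R mat 1 + d *\<^sub>R Amat \<omega>) = (\<tau>*d*\<omega>\<^sup>2) *\<^sub>R mat 1 + (\<tau>*c) *\<^sub>R Amat \<omega>"
  by (simp add: vec_eq_iff forall_2 matrix_matrix_mult_def sum_2 Amat_def mat_def algebra_simps power2_eq_square)

lemma matpow:
  fixes \<omega> \<tau> :: real assumes "\<omega> \<noteq> 0"
  shows "mat_pow (\<tau> *\<^sub>R Amat \<omega>) k =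
     (((\<omega>*\<tau>)^k + (-(\<omega>*\<tau>))^k)/2) *\<^sub>R mat 1 + (((\<omega>*\<tau>)^k - (-(\<omega>*\<tau>))^k)/(2*\<omega>)) *\<^sub>R Amat \<omega>"
proof (induction k)
  case 0
  then show ?case by simp
next
  case (Suc k)
  have e1: "\<tau> * (((\<omega>*\<tau>)^k - (-(\<omega>*\<tau>))^k)/(2*\<omega>)) * \<omega>\<^sup>2 = ((\<omega>*\<tau>)^Suc k + (-(\<omega>*\<tau>))^Suc k)/2"
    using assms by (simp add: field_simps power2_eq_square)
  have e2: "\<tau> * (((\<omega>*\<tau>)^k + (-(\<omega>*\<tau>))^k)/2) = ((\<omega>*\<tau>)^Suc k - (-(\<omega>*\<tau>))^Suc k)/(2*\<omega>)"
    using assms by (simp add: field_simps)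
  show ?case
    unfolding mat_pow.simps Suc Amul e1 e2 ..
qed

lemma mexp_eq:
  fixes \<omega> \<tau> :: real assumes "\<omega> \<noteq> 0"
  shows "mexp (\<tau> *\<^sub>R Amat \<omega>) =
     ((exp (\<omega>*\<tau>) + exp (-(\<omega>*\<tau>)))/2) *\<^sub>R mat 1 + ((exp (\<omega>*\<tau>) - exp (-(\<omega>*\<tau>)))/(2*\<omega>)) *\<^sub>R Amat \<omega>"
proof -
  define y where "y = \<omega>*\<tau>"
  define c where "c = (\<lambda>n::nat. (y^n + (-y)^n)/2)"
  define d where "d = (\<lambda>n::nat. (y^n - (-y)^n)/(2*\<omega>))"
  have f1: "(\<lambda>n. (y^n /\<^sub>R fact n + (-y)^n /\<^sub>R fact n)/2) = (\<lambda>n. c n / fact n)"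
    unfolding c_def by (rule ext) (simp add: field_simps)
  have s1: "(\<lambda>n. c n / fact n) sums ((exp y + exp (-y))/2)"
    using sums_divide[OF sums_add[OF exp_converges[of y] exp_converges[of "-y"]], of 2]
    unfolding f1 .
  have f2: "(\<lambda>n. (y^n /\<^sub>R fact n - (-y)^n /\<^sub>R fact n)/(2*\<omega>)) = (\<lambda>n. d n / fact n)"
    unfolding d_def by (rule ext) (simp add: field_simps)
  have s2: "(\<lambda>n. d n / fact n) sums ((exp y - exp (-y))/(2*\<omega>))"
    using sums_divide[OF sums_diff[OF exp_converges[of y] exp_converges[of "-y"]], of "2*\<omega>"]
    unfolding f2 .
  have f3: "(\<lambda>k. (1 / fact k) *\<^sub>R mat_pow (\<tau> *\<^sub>R Amat \<omega>) k) =
     (\<lambda>k. (c k / fact k) *\<^sub>R mat 1 + (d k / fact k) *\<^sub>R Amat \<omega>)"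
  proof (rule ext)
    fix k
    show "(1 / fact k) *\<^sub>R mat_pow (\<tau> *\<^sub>R Amat \<omega>) k = (c k / fact k) *\<^sub>R mat 1 + (d k / fact k) *\<^sub>R Amat \<omega>"
      unfolding matpow[OF assms] c_def d_def y_def scaleR_add_right scaleR_scaleR by (simp add: mult.commute)
  qed
  have "(\<lambda>k. (1 / fact k) *\<^sub>R mat_pow (\<tau> *\<^sub>R Amat \<omega>) k) sums
     (((exp y + exp (-y))/2) *\<^sub>R mat 1 + ((exp y - exp (-y))/(2*\<omega>)) *\<^sub>R Amat \<omega>)"
    unfolding f3
    by (rule sums_add[OF sums_scaleR_left[OF s1] sums_scaleR_left[OF s2]])
  then show ?thesis unfolding mexp_def y_def by (rule sums_unique[symmetric])
qed


lemma eta_val: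
  fixes \<omega> r a E z :: real
  assumes "r > 0" "E > 1" "z > 0" "a*(E-1) = r*(E+1)"
  defines "X \<equiv> -r*(z+1/z)/2 + a*(z-1/z)/2"
  shows "(r - X - r + sqrt ((r-X)\<^sup>2 - 2*r*(r-X) + a\<^sup>2)) / (a - r) = E / z"
proof -
  define w where "w = 1/z"
  have zw: "z*w = 1" unfolding w_def using assms(3) by simp
  have Xw: "X = (a-r)/2*z - (a+r)/2*w" unfolding X_def w_def using assms(3) by (simp add: field_simps)
  have are: "a + r = E*(a-r)" using assms(4) by (simp add: algebra_simps)
  have "a*(E-1) > 0" using assms(1,2,4) by simp
  then have "a > 0" using assms(2) by (simp add: zero_less_mult_iff)
  have "(a - r) * (E - 1) = 2*r" using assms(4) by (simp add: algebra_simps)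
  then have "(a - r) * (E - 1) > 0" using assms(1) by simp
  then have apos: "a > r" using assms(2) by (simp add: zero_less_mult_iff)
  have id: "((a-r)/2*z + (a+r)/2*w)\<^sup>2 - ((r-X)\<^sup>2 - 2*r*(r-X) + a\<^sup>2) = (a\<^sup>2-r\<^sup>2)*(z*w-1)"
    unfolding Xw by (simp add: power2_eq_square field_simps)
  have sq: "(r-X)\<^sup>2 - 2*r*(r-X) + a\<^sup>2 = ((a-r)/2*z + (a+r)/2*w)\<^sup>2"
    using id zw by simp
  have pos: "(a-r)/2*z + (a+r)/2*w > 0" using apos assms(1,3) unfolding w_def
    by (intro add_pos_pos mult_pos_pos) auto
  have "sqrt ((r-X)\<^sup>2 - 2*r*(r-X) + a\<^sup>2) = (a-r)/2*z + (a+r)/2*w"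
    unfolding sq using pos by simp
  then have "r - X - r + sqrt ((r-X)\<^sup>2 - 2*r*(r-X) + a\<^sup>2) = -X + ((a-r)/2*z + (a+r)/2*w)"
    by simp
  also have "\<dots> = (a+r)*w" unfolding Xw by (simp add: algebra_simps)
  also have "\<dots> = E*(a-r)*w" using are by simp
  finally have "(r - X - r + sqrt ((r-X)\<^sup>2 - 2*r*(r-X) + a\<^sup>2)) / (a - r) = E*(a-r)*w/(a-r)"
    by simp
  also have "\<dots> = E / z" using apos unfolding w_def by simp
  finally show ?thesis .
qed


lemma xref_eq:
  fixes \<omega> r v \<tau> :: real assumes "\<omega> \<noteq> 0"
  shows "x_ref \<omega> r v \<tau> = ((exp(\<omega>*\<tau>)+exp(-(\<omega>*\<tau>)))/2) *\<^sub>R vector[-r,v]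
     + ((exp(\<omega>*\<tau>)-exp(-(\<omega>*\<tau>)))/(2*\<omega>)) *\<^sub>R vector[v, \<omega>\<^sup>2*(-r)]"
  unfolding x_ref_def mexp_eq[OF assms]
  by (simp add: vec_eq_iff forall_2 matrix_vector_mult_def sum_2 mat_def Amat_def algebra_simps)

lemma xref_deriv:
  fixes \<omega> r v \<tau> :: real assumes "\<omega> \<noteq> 0"
  shows "(x_ref \<omega> r v has_vector_derivative Amat \<omega> *v x_ref \<omega> r v \<tau>) (at \<tau>)"
proof -
  have e: "x_ref \<omega> r v = (\<lambda>\<tau>. ((exp(\<omega>*\<tau>)+exp(-(\<omega>*\<tau>)))/2) *\<^sub>R vector[-r,v]
     + ((exp(\<omega>*\<tau>)-exp(-(\<omega>*\<tau>)))/(2*\<omega>)) *\<^sub>R vector[v, \<omega>\<^sup>2*(-r)])"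
    using xref_eq[OF assms] by blast
  have d1: "((\<lambda>s. (exp(\<omega> * s)+exp(-(\<omega> * s)))/2) has_field_derivative
      (\<omega>*(exp(\<omega>*\<tau>)-exp(-(\<omega>*\<tau>)))/2)) (at \<tau>)"
    by (auto intro!: derivative_eq_intros simp: field_simps)
  have d2: "((\<lambda>s. (exp(\<omega> * s)-exp(-(\<omega> * s)))/(2*\<omega>)) has_field_derivative
      (\<omega>*(exp(\<omega>*\<tau>)+exp(-(\<omega>*\<tau>)))/(2*\<omega>))) (at \<tau>)"
    using assms by (auto intro!: derivative_eq_intros simp: field_simps)
  have "((\<lambda>\<tau>. ((exp(\<omega>*\<tau>)+exp(-(\<omega>*\<tau>)))/2) *\<^sub>R vector[-r,v]
     + ((exp(\<omega>*\<tau>)-exp(-(\<omega>*\<tau>)))/(2*\<omega>)) *\<^sub>R (vector[v, \<omega>\<^sup>2*(-r)]::real^2)) has_vector_derivative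
     ((\<omega>*(exp(\<omega>*\<tau>)-exp(-(\<omega>*\<tau>)))/2) *\<^sub>R vector[-r,v]
     + (\<omega>*(exp(\<omega>*\<tau>)+exp(-(\<omega>*\<tau>)))/(2*\<omega>)) *\<^sub>R vector[v, \<omega>\<^sup>2*(-r)])) (at \<tau>)"
    using has_vector_derivative_add[OF has_vector_derivative_scaleR[OF d1 has_vector_derivative_const]
       has_vector_derivative_scaleR[OF d2 has_vector_derivative_const]] assms by simp
  then show ?thesis unfolding e
    apply (rule has_vector_derivative_eq_rhs)
    using assms by (simp add: vec_eq_iff forall_2 matrix_vector_mult_def sum_2 Amat_def field_simps power2_eq_square)
qed


theorem lemma1:
  fixes \<omega> rbar vbar T :: real
  assumes "\<omega> > 0" and "rbar > 0" and "vbar > 0" and "T > 0"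
    and "mexp (T *\<^sub>R Amat \<omega>) *v vector [- rbar, vbar] = vector [rbar, vbar]"
  shows
    "(\<forall>(x :: real \<Rightarrow> real^2) (\<tau> :: real \<Rightarrow> real) (u :: real \<Rightarrow> real) (t :: real) (S :: real set).
        x t \<in> flow_set rbar \<and> \<tau> t \<in> {- T..2 * T} \<and>
        (x has_vector_derivative (Amat \<omega> *v x t + u t *\<^sub>R Bvec \<omega>)) (at t within S) \<and>
        (\<tau> has_real_derivative 1) (at t within S)
        \<longrightarrow> ((\<lambda>s. x s - x_ref \<omega> rbar vbar (\<tau> s)) has_vector_derivative
               (Amat \<omega> *v (x t - x_ref \<omega> rbar vbar (\<tau> t)) + u t *\<^sub>R Bvec \<omega>)) (at t within S))
     \<and>
     (\<forall>(x :: real^2) (\<tau> :: real).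
        x \<in> jump_set rbar \<and> \<tau> \<in> {- T..2 * T} \<longrightarrow>
        (let \<epsilon> = x - x_ref \<omega> rbar vbar \<tau>;
             \<epsilon>' = jump_x rbar x - x_ref \<omega> rbar vbar (\<tau> - T);
             e = eta \<omega> rbar vbar (\<epsilon>$1)
         in \<epsilon>' = \<epsilon> + rbar *\<^sub>R vector [e + 1 / e - 2, \<omega> * (1 / e - e)]))"
proof (intro conjI allI impI)
  have w: "\<omega> \<noteq> 0" using assms(1) by simp
  fix x :: "real \<Rightarrow> real^2" and \<tau> :: "real \<Rightarrow> real" and u :: "real \<Rightarrow> real" and t :: real and S :: "real set"
  assume H: "x t \<in> flow_set rbar \<and> \<tau> t \<in> {- T..2 * T} \<and>
        (x has_vector_derivative (Amat \<omega> *v x t + u t *\<^sub>R Bvec \<omega>)) (at t within S) \<and>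
        (\<tau> has_real_derivative 1) (at t within S)"
  have dt: "(\<tau> has_vector_derivative 1) (at t within S)"
    using H has_real_derivative_iff_has_vector_derivative by blast
  have dr: "(x_ref \<omega> rbar vbar has_vector_derivative Amat \<omega> *v x_ref \<omega> rbar vbar (\<tau> t)) (at (\<tau> t) within \<tau> ` S)"
    using xref_deriv[OF w] has_vector_derivative_at_within by blast
  have ch: "((x_ref \<omega> rbar vbar \<circ> \<tau>) has_vector_derivative (1 *\<^sub>R (Amat \<omega> *v x_ref \<omega> rbar vbar (\<tau> t)))) (at t within S)"
    by (rule vector_diff_chain_within[OF dt dr])
  then have "((\<lambda>s. x s - x_ref \<omega> rbar vbar (\<tau> s)) has_vector_derivative
     ((Amat \<omega> *v x t + u t *\<^sub>R Bvec \<omega>) - (Amat \<omega> *v x_ref \<omega> rbar vbar (\<tau> t)))) (at t within S)"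
    using has_vector_derivative_diff[OF conjunct1[OF conjunct2[OF conjunct2[OF H]]] ch] by (simp add: o_def)
  then show "((\<lambda>s. x s - x_ref \<omega> rbar vbar (\<tau> s)) has_vector_derivative
               (Amat \<omega> *v (x t - x_ref \<omega> rbar vbar (\<tau> t)) + u t *\<^sub>R Bvec \<omega>)) (at t within S)"
    by (simp add: matrix_vector_mult_diff_distrib algebra_simps)
next
  have w: "\<omega> \<noteq> 0" using assms(1) by simp
  fix x :: "real^2" and \<tau> :: real
  assume H: "x \<in> jump_set rbar \<and> \<tau> \<in> {- T..2 * T}"
  have x1: "x$1 = rbar" using H unfolding jump_set_def by simp
  define E where "E = exp (\<omega>*T)"
  define z where "z = exp (\<omega>*\<tau>)"
  define a where "a = vbar/\<omega>"
  have E1: "E > 1" unfolding E_def using assms by simp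
  have zp: "z > 0" unfolding z_def by simp
  have va: "vbar = a*\<omega>" unfolding a_def using w by simp
  have eT: "exp (-(\<omega>*T)) = 1/E" unfolding E_def by (simp add: exp_minus field_simps)
  have ez: "exp (-(\<omega>*\<tau>)) = 1/z" unfolding z_def by (simp add: exp_minus field_simps)
  have ez2: "exp (\<omega>*(\<tau>-T)) = z/E" unfolding z_def E_def by (simp add: right_diff_distrib exp_diff)
  have ez3: "exp (-(\<omega>*(\<tau>-T))) = E/z" unfolding z_def E_def by (simp add: right_diff_distrib exp_diff exp_minus field_simps)
  have "(mexp (T *\<^sub>R Amat \<omega>) *v vector [- rbar, vbar]) $ 1 = rbar" using assms(5) by simp
  then have "-rbar*(E+1/E)/2 + (vbar/\<omega>)*(E-1/E)/2 = rbar"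
    using xref_eq[OF w, of rbar vbar T] w unfolding x_ref_def eT E_def[symmetric]
    by (simp add: field_simps)
  then have "-rbar*(E+1/E)/2 + a*(E-1/E)/2 = rbar" unfolding a_def .
  then have "E * (-rbar*(E*E+1) + a*(E*E-1)) = E * (2*rbar*E)" using E1 by (simp add: field_simps)
  then have "-rbar*(E*E+1) + a*(E*E-1) = 2*rbar*E" using E1 by simp
  then have "(E+1) * (a*(E-1)) = (E+1) * (rbar*(E+1))" by (simp add: algebra_simps)
  then have rel: "a*(E-1) = rbar*(E+1)" using E1 by simp
  have xr1: "x_ref \<omega> rbar vbar \<tau> = vector [-rbar*(z+1/z)/2 + a*(z-1/z)/2, a*\<omega>*(z+1/z)/2 - rbar*\<omega>*(z-1/z)/2]"
    unfolding xref_eq[OF w] ez z_def[symmetric] va using w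
    by (simp add: vec_eq_iff forall_2 field_simps power2_eq_square)
  have xr2: "x_ref \<omega> rbar vbar (\<tau>-T) = vector [-rbar*(z/E+E/z)/2 + a*(z/E-E/z)/2, a*\<omega>*(z/E+E/z)/2 - rbar*\<omega>*(z/E-E/z)/2]"
    unfolding xref_eq[OF w] ez2 ez3 va using w
    by (simp add: vec_eq_iff forall_2 field_simps power2_eq_square)
  have eta: "eta \<omega> rbar vbar ((x - x_ref \<omega> rbar vbar \<tau>)$1) = E/z"
    unfolding eta_def xr1 a_def[symmetric] using eta_val[OF assms(2) E1 zp rel] x1 by simp
  have aeq: "a = rbar*(E+1)/(E-1)" using rel E1 by (simp add: field_simps)
  show "let \<epsilon> = x - x_ref \<omega> rbar vbar \<tau>;
             \<epsilon>' = jump_x rbar x - x_ref \<omega> rbar vbar (\<tau> - T);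
             e = eta \<omega> rbar vbar (\<epsilon>$1)
         in \<epsilon>' = \<epsilon> + rbar *\<^sub>R vector [e + 1 / e - 2, \<omega> * (1 / e - e)]"
    unfolding Let_def eta unfolding xr1 xr2 jump_x_def aeq using E1 zp
    by (simp add: vec_eq_iff forall_2 field_simps)
qed

end
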